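(* In the setting described in the context, the following hold. (1) Suppose that for a fixed $b_0\in(0,1)$ and some $b_h<b_0$ one has $|J(u)-J(u_h^{(2)})|<b_h|J(u)-J(\tilde u)|$. Then $$I_{eff}:=\frac{|\eta^{(2)}|}{|J(u)-J(\tilde u)|}\in[1-b_0,\,1+b_0].$$ If moreover this holds along a family of such configurations (indexed by $h$) with $b_h\to0$, then $I_{eff}\to1$. (2) Suppose that for a fixed $b_{0,\gamma}\in(0,1)$ and some $b_{h,\gamma}<b_{0,\gamma}$ one has $\gamma<b_{h,\gamma}|J(u)-J(\tilde u)|$. Then $$I_{eff,\gamma}:=\frac{|\eta_h^{(2)}|}{|J(u)-J(\tilde u)|}\in[1-b_{0,\gamma},\,1+b_{0,\gamma}].$$ If moreover this holds along a family of such configurations with $b_{h,\gamma}\to0$, then $I_{eff,\gamma}\to1$.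
   Context: Let $U$ and $V$ be real Banach spaces with dual $V^*$. Let $\mathcal{A}:U\to V^*$ be a (nonlinear) operator that is three times continuously Fréchet differentiable, and let $J:U\to\mathbb{R}$ be three times continuously Fréchet differentiable. Notation: $\mathcal{A}(w)(v)$ is the value of $\mathcal{A}(w)\in V^*$ at $v\in V$. For fixed $v$, $\mathcal{A}'(w)(\varphi,v)$, $\mathcal{A}''(w)(\varphi,\psi,v)$ and $\mathcal{A}'''(w)(\varphi,\psi,\chi,v)$ denote the first, second and third Fréchet derivatives of $w\mapsto\mathcal{A}(w)(v)$ at $w$ in the directions $\varphi,\psi,\chi\in U$. Analogously, $J'(w)(\varphi)$ and $J'''(w)(\varphi,\psi,\chi)$ denote derivatives of $J$. Let $u\in U$ satisfy $\mathcal{A}(u)(v)=0$ for all $v\in V$, and let $z\in V$ satisfy $\mathcal{A}'(u)(\varphi,z)=J'(u)(\varphi)$ for all $\varphi\in U$. Let $U_h^{(2)}\subset U$ and $V_h^{(2)}\subset V$ be finite-dimensional subspaces. Let $u_h^{(2)}\in U_h^{(2)}$ satisfy $\mathcal{A}(u_h^{(2)})(v)=0$ for all $v\in V_h^{(2)}$. Let $z_h^{(2)}\in V_h^{(2)}$ satisfy $\mathcal{A}'(u_h^{(2)})(\varphi,z_h^{(2)})=J'(u_h^{(2)})(\varphi)$ for all $\varphi\in U_h^{(2)}$. Let $\tilde u\in U_h^{(2)}$ and $\tilde z\in V_h^{(2)}$ be arbitrary fixed elements. Define $\rho(\tilde u)(v):=-\mathcal{A}(\tilde u)(v)$ and $\rho^*(\tilde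 u,\tilde z)(\varphi):=J'(\tilde u)(\varphi)-\mathcal{A}'(\tilde u)(\varphi,\tilde z)$. With $e:=u-\tilde u$ and $e^*:=z-\tilde z$, define $$\mathcal{R}^{(3)}:=\frac12\int_0^1\Big[J'''(\tilde u+se)(e,e,e)-\mathcal{A}'''(\tilde u+se)(e,e,e,\tilde z+se^* )-3\mathcal{A}''(\tilde u+se)(e,e,e^* )\Big]s(s-1)\,ds.$$ Let $\mathcal{R}^{(3)(2)}$ be the same expression with $e,e^*,z$ replaced by $e^{(2)}:=u_h^{(2)}-\tilde u$, $e^{(2),*}:=z_h^{(2)}-\tilde z$, $z_h^{(2)}$. Define $$\eta_h^{(2)}:=\tfrac12\rho(\tilde u)(z_h^{(2)}-\tilde z)+\tfrac12\rho^*(\tilde u,\tilde z)(u_h^{(2)}-\tilde u),\qquad \eta^{(2)}:=\eta_h^{(2)}+\rho(\tilde u)(\tilde z)+\mathcal{R}^{(3)(2)},$$ $$\gamma:=|J(u)-J(u_h^{(2)})|+|\mathcal{R}^{(3)}-\mathcal{R}^{(3)(2)}|+|\rho(\tilde u)(\tilde z)|+|\mathcal{R}^{(3)}|.$$ *)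

theory Defs
  imports "HOL-Analysis.Analysis"
begin

text \<open>The operator A : U \<rightarrow> V* and its Frechet derivatives are given as bounded linear
  maps; A1 w \<phi> v = A'(w)(\<phi>,v), A2 w \<phi> \<psi> v = A''(w)(\<phi>,\<psi>,v), etc.\<close>

definition finite_dim_subspace :: "'a::real_vector set \<Rightarrow> bool" where
  "finite_dim_subspace S \<longleftrightarrow> subspace S \<and> (\<exists>B. finite B \<and> span B = S)"

definition rho :: "('u \<Rightarrow> ('v::real_normed_vector \<Rightarrow>\<^sub>L real)) \<Rightarrow> 'u \<Rightarrow> 'v \<Rightarrow> real" where
  "rho A ut v = - blinfun_apply (A ut) v"

definition rhostar :: "('u::real_normed_vector \<Rightarrow> ('u \<Rightarrow>\<^sub>L real))
    \<Rightarrow> ('u \<Rightarrow> ('u \<Rightarrow>\<^sub>L ('v::real_normed_vector \<Rightarrow>\<^sub>L real))) \<Rightarrow> 'u \<Rightarrow> 'v \<Rightarrow> 'u \<Rightarrow> real" where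
  "rhostar J1 A1 ut zt \<phi> = blinfun_apply (J1 ut) \<phi> - blinfun_apply (blinfun_apply (A1 ut) \<phi>) zt"

definition R3 :: "('u::real_normed_vector \<Rightarrow> ('u \<Rightarrow>\<^sub>L 'u \<Rightarrow>\<^sub>L 'u \<Rightarrow>\<^sub>L real))
    \<Rightarrow> ('u \<Rightarrow> ('u \<Rightarrow>\<^sub>L 'u \<Rightarrow>\<^sub>L ('v::real_normed_vector \<Rightarrow>\<^sub>L real)))
    \<Rightarrow> ('u \<Rightarrow> ('u \<Rightarrow>\<^sub>L 'u \<Rightarrow>\<^sub>L 'u \<Rightarrow>\<^sub>L ('v \<Rightarrow>\<^sub>L real)))
    \<Rightarrow> 'u \<Rightarrow> 'v \<Rightarrow> 'u \<Rightarrow> 'v \<Rightarrow> real" where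
  "R3 J3 A2 A3 ut zt e es = 1/2 * integral {0..1} (\<lambda>s::real.
      (blinfun_apply (blinfun_apply (blinfun_apply (J3 (ut + s *\<^sub>R e)) e) e) e
       - blinfun_apply (blinfun_apply (blinfun_apply (blinfun_apply (A3 (ut + s *\<^sub>R e)) e) e) e) (zt + s *\<^sub>R es)
       - 3 * blinfun_apply (blinfun_apply (blinfun_apply (A2 (ut + s *\<^sub>R e)) e) e) es)
      * (s * (s - 1)))"

definition galerkin_config :: "('u::real_normed_vector \<Rightarrow> ('v::real_normed_vector \<Rightarrow>\<^sub>L real))
    \<Rightarrow> ('u \<Rightarrow> ('u \<Rightarrow>\<^sub>L ('v \<Rightarrow>\<^sub>L real))) \<Rightarrow> ('u \<Rightarrow> ('u \<Rightarrow>\<^sub>L real))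
    \<Rightarrow> 'u set \<Rightarrow> 'v set \<Rightarrow> 'u \<Rightarrow> 'v \<Rightarrow> 'u \<Rightarrow> 'v \<Rightarrow> bool" where
  "galerkin_config A A1 J1 Uh Vh uh zh ut zt \<longleftrightarrow>
     finite_dim_subspace Uh \<and> finite_dim_subspace Vh \<and>
     uh \<in> Uh \<and> (\<forall>v\<in>Vh. blinfun_apply (A uh) v = 0) \<and>
     zh \<in> Vh \<and> (\<forall>\<phi>\<in>Uh. blinfun_apply (blinfun_apply (A1 uh) \<phi>) zh = blinfun_apply (J1 uh) \<phi>) \<and>
     ut \<in> Uh \<and> zt \<in> Vh"

definition eta_h2 where
  "eta_h2 A A1 J1 uh zh ut zt =
     1/2 * rho A ut (zh - zt) + 1/2 * rhostar J1 A1 ut zt (uh - ut)"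

definition eta2 where
  "eta2 A A1 A2 A3 J1 J3 uh zh ut zt =
     eta_h2 A A1 J1 uh zh ut zt + rho A ut zt + R3 J3 A2 A3 ut zt (uh - ut) (zh - zt)"

definition gamma where
  "gamma J A A2 A3 J3 u z uh zh ut zt =
     \<bar>J u - J uh\<bar> + \<bar>R3 J3 A2 A3 ut zt (u - ut) (z - zt) - R3 J3 A2 A3 ut zt (uh - ut) (zh - zt)\<bar>
     + \<bar>rho A ut zt\<bar> + \<bar>R3 J3 A2 A3 ut zt (u - ut) (z - zt)\<bar>"

end

theory Submission imports Defs begin

lemma chain_vd:
  assumes "\<And>w. (F has_derivative blinfun_apply (F' w)) (at w)"
  shows "((\<lambda>s. F (a + s *\<^sub>R e)) has_vector_derivative blinfun_apply (F' (a + s *\<^sub>R e)) e) (at s)"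
proof -
  have "((\<lambda>s. a + s *\<^sub>R e) has_derivative (\<lambda>h. h *\<^sub>R e)) (at s)"
    by (auto intro!: derivative_eq_intros)
  from has_derivative_compose[OF this assms]
  show ?thesis by (simp add: has_vector_derivative_def blinfun.scaleR_right)
qed

lemma apply_vd:
  assumes "(P has_vector_derivative P') (at s)" "(q has_vector_derivative q') (at s)"
  shows "((\<lambda>s. blinfun_apply (P s) (q s)) has_vector_derivative
           (blinfun_apply (P s) q' + blinfun_apply P' (q s))) (at s)"
  using bounded_bilinear.has_vector_derivative[OF bounded_bilinear_blinfun_apply assms] by simp

lemma apply_const_vd:
  assumes "(P has_vector_derivative P') (at s)"
  shows "((\<lambda>s. blinfun_apply (P s) c) has_vector_derivative blinfun_apply P' c) (at s)"
  using apply_vd[OF assms, of "\<lambda>_. c" 0] by simp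

lemma trap:
  fixes g g1 g2 g3 :: "real \<Rightarrow> real"
  assumes d0: "\<And>s. (g has_vector_derivative g1 s) (at s)"
    and d1: "\<And>s. (g1 has_vector_derivative g2 s) (at s)"
    and d2: "\<And>s. (g2 has_vector_derivative g3 s) (at s)"
  shows "g 1 - g 0 = (g1 0 + g1 1)/2 + 1/2 * integral {0..1} (\<lambda>s. g3 s * (s*(s-1)))"
proof -
  define F where "F s = g2 s * (s*(s-1)/2) - g1 s * (s - 1/2) + g s" for s
  have "(F has_vector_derivative (g3 s * (s*(s-1)) / 2)) (at s)" for s
  proof -
    have D0: "(g has_real_derivative g1 s) (at s)" using d0 by (simp add: has_real_derivative_iff_has_vector_derivative)
    have D1: "(g1 has_real_derivative g2 s) (at s)" using d1 by (simp add: has_real_derivative_iff_has_vector_derivative)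
    have D2: "(g2 has_real_derivative g3 s) (at s)" using d2 by (simp add: has_real_derivative_iff_has_vector_derivative)
    have P: "((\<lambda>s. s*(s-1)/2) has_real_derivative (2 * s - 1)/2) (at s)"
      by (auto intro!: derivative_eq_intros simp: field_simps)
    have Q: "((\<lambda>s. s - 1/2) has_real_derivative 1) (at s)"
      by (auto intro!: derivative_eq_intros)
    have "(F has_real_derivative
      (g3 s * (s*(s-1)/2) + (2 * s - 1)/2 * g2 s) - (g2 s * (s - 1/2) + 1 * g1 s) + g1 s) (at s)"
      unfolding F_def by (rule DERIV_add[OF DERIV_diff[OF DERIV_mult[OF D2 P] DERIV_mult[OF D1 Q]] D0])
    moreover have "(g3 s * (s*(s-1)/2) + (2 * s - 1)/2 * g2 s) - (g2 s * (s - 1/2) + 1 * g1 s) + g1 s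
       = g3 s * (s*(s-1)) / 2" by (simp add: field_simps)
    ultimately have "(F has_real_derivative g3 s * (s*(s-1)) / 2) (at s)" by metis
    thus ?thesis by (simp add: has_real_derivative_iff_has_vector_derivative)
  qed
  hence "((\<lambda>s. g3 s * (s*(s-1)) / 2) has_integral F 1 - F 0) {0..1}"
    by (intro fundamental_theorem_of_calculus) (auto intro: has_vector_derivative_at_within)
  hence "integral {0..1} (\<lambda>s. g3 s * (s*(s-1)) / 2) = F 1 - F 0" by blast
  hence "integral {0..1} (\<lambda>s. g3 s * (s*(s-1))) / 2 = F 1 - F 0"
    by simp
  thus ?thesis unfolding F_def by (simp add: field_simps)
qed

lemma key_identity:
  fixes A :: "'u::real_normed_vector \<Rightarrow> ('v::real_normed_vector \<Rightarrow>\<^sub>L real)"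
    and A1 :: "'u \<Rightarrow> ('u \<Rightarrow>\<^sub>L ('v \<Rightarrow>\<^sub>L real))"
    and A2 :: "'u \<Rightarrow> ('u \<Rightarrow>\<^sub>L 'u \<Rightarrow>\<^sub>L ('v \<Rightarrow>\<^sub>L real))"
    and A3 :: "'u \<Rightarrow> ('u \<Rightarrow>\<^sub>L 'u \<Rightarrow>\<^sub>L 'u \<Rightarrow>\<^sub>L ('v \<Rightarrow>\<^sub>L real))"
    and J :: "'u \<Rightarrow> real"
    and J1 :: "'u \<Rightarrow> ('u \<Rightarrow>\<^sub>L real)"
    and J2 :: "'u \<Rightarrow> ('u \<Rightarrow>\<^sub>L 'u \<Rightarrow>\<^sub>L real)"
    and J3 :: "'u \<Rightarrow> ('u \<Rightarrow>\<^sub>L 'u \<Rightarrow>\<^sub>L 'u \<Rightarrow>\<^sub>L real)"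
  assumes dA: "\<And>w. (A has_derivative blinfun_apply (A1 w)) (at w)"
    and dA1: "\<And>w. (A1 has_derivative blinfun_apply (A2 w)) (at w)"
    and dA2: "\<And>w. (A2 has_derivative blinfun_apply (A3 w)) (at w)"
    and dJ: "\<And>w. (J has_derivative blinfun_apply (J1 w)) (at w)"
    and dJ1: "\<And>w. (J1 has_derivative blinfun_apply (J2 w)) (at w)"
    and dJ2: "\<And>w. (J2 has_derivative blinfun_apply (J3 w)) (at w)"
    and gc: "galerkin_config A A1 J1 Uh Vh uh zh ut zt"
  shows "J uh - J ut = eta2 A A1 A2 A3 J1 J3 uh zh ut zt"
proof -
  define e where "e = uh - ut"
  define es where "es = zh - zt"
  have sU: "subspace Uh" and sV: "subspace Vh" using gc unfolding galerkin_config_def finite_dim_subspace_def by auto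
  have eU: "e \<in> Uh" using gc sU unfolding galerkin_config_def e_def by (auto intro: subspace_diff)
  have eV: "es \<in> Vh" using gc sV unfolding galerkin_config_def es_def by (auto intro: subspace_diff)
  have Auh: "blinfun_apply (A uh) es = 0" using gc eV unfolding galerkin_config_def by auto
  have Auh0: "blinfun_apply (A uh) zh = 0" using gc unfolding galerkin_config_def by auto
  have A1uh: "blinfun_apply (blinfun_apply (A1 uh) e) zh = blinfun_apply (J1 uh) e"
    using gc eU unfolding galerkin_config_def by auto
  define x where "x s = ut + s *\<^sub>R e" for s :: real
  define y where "y s = zt + s *\<^sub>R es" for s :: real
  define g where "g s = J (x s) - blinfun_apply (A (x s)) (y s)" for s
  define g1 where "g1 s = blinfun_apply (J1 (x s)) e - blinfun_apply (blinfun_apply (A1 (x s)) e) (y s)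
      - blinfun_apply (A (x s)) es" for s
  define g2 where "g2 s = blinfun_apply (blinfun_apply (J2 (x s)) e) e
      - blinfun_apply (blinfun_apply (blinfun_apply (A2 (x s)) e) e) (y s)
      - 2 * blinfun_apply (blinfun_apply (A1 (x s)) e) es" for s
  define g3 where "g3 s = blinfun_apply (blinfun_apply (blinfun_apply (J3 (x s)) e) e) e
      - blinfun_apply (blinfun_apply (blinfun_apply (blinfun_apply (A3 (x s)) e) e) e) (y s)
      - 3 * blinfun_apply (blinfun_apply (blinfun_apply (A2 (x s)) e) e) es" for s
  have yd: "(y has_vector_derivative es) (at s)" for s
    unfolding y_def by (auto intro!: derivative_eq_intros)
  have xA: "((\<lambda>s. A (x s)) has_vector_derivative blinfun_apply (A1 (x s)) e) (at s)" for s
    unfolding x_def by (rule chain_vd[OF dA])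
  have xA1: "((\<lambda>s. A1 (x s)) has_vector_derivative blinfun_apply (A2 (x s)) e) (at s)" for s
    unfolding x_def by (rule chain_vd[OF dA1])
  have xA2: "((\<lambda>s. A2 (x s)) has_vector_derivative blinfun_apply (A3 (x s)) e) (at s)" for s
    unfolding x_def by (rule chain_vd[OF dA2])
  have xJ: "((\<lambda>s. J (x s)) has_vector_derivative blinfun_apply (J1 (x s)) e) (at s)" for s
    unfolding x_def by (rule chain_vd[OF dJ])
  have xJ1: "((\<lambda>s. J1 (x s)) has_vector_derivative blinfun_apply (J2 (x s)) e) (at s)" for s
    unfolding x_def by (rule chain_vd[OF dJ1])
  have xJ2: "((\<lambda>s. J2 (x s)) has_vector_derivative blinfun_apply (J3 (x s)) e) (at s)" for s
    unfolding x_def by (rule chain_vd[OF dJ2])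
  have d0: "(g has_vector_derivative g1 s) (at s)" for s
  proof -
    have "(g has_vector_derivative (blinfun_apply (J1 (x s)) e -
       (blinfun_apply (A (x s)) es + blinfun_apply (blinfun_apply (A1 (x s)) e) (y s)))) (at s)"
      unfolding g_def by (intro derivative_intros xJ apply_vd xA yd)
    thus ?thesis unfolding g1_def by (simp add: algebra_simps)
  qed
  have d1: "(g1 has_vector_derivative g2 s) (at s)" for s
  proof -
    have "(g1 has_vector_derivative (blinfun_apply (blinfun_apply (J2 (x s)) e) e -
       (blinfun_apply (blinfun_apply (A1 (x s)) e) es + blinfun_apply (blinfun_apply (blinfun_apply (A2 (x s)) e) e) (y s))
       - blinfun_apply (blinfun_apply (A1 (x s)) e) es)) (at s)"
      unfolding g1_def by (intro derivative_intros apply_const_vd xJ1 apply_vd xA yd xA1)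
    thus ?thesis unfolding g2_def by (simp add: algebra_simps)
  qed
  have d2: "(g2 has_vector_derivative g3 s) (at s)" for s
  proof -
    have "(g2 has_vector_derivative (blinfun_apply (blinfun_apply (blinfun_apply (J3 (x s)) e) e) e -
       (blinfun_apply (blinfun_apply (blinfun_apply (A2 (x s)) e) e) es + blinfun_apply (blinfun_apply (blinfun_apply (blinfun_apply (A3 (x s)) e) e) e) (y s))
       - 2 * blinfun_apply (blinfun_apply (blinfun_apply (A2 (x s)) e) e) es)) (at s)"
      unfolding g2_def by (intro derivative_intros apply_const_vd xJ2 apply_vd xA1 yd xA2 has_vector_derivative_mult)
    thus ?thesis unfolding g3_def by (simp add: algebra_simps)
  qed
  have T: "g 1 - g 0 = (g1 0 + g1 1)/2 + 1/2 * integral {0..1} (\<lambda>s. g3 s * (s*(s-1)))"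
    by (rule trap[OF d0 d1 d2])
  have x1: "x 1 = uh" "x 0 = ut" unfolding x_def e_def by auto
  have y1: "y 1 = zh" "y 0 = zt" unfolding y_def es_def by auto
  have "g1 1 = 0" unfolding g1_def using x1 y1 Auh A1uh by simp
  moreover have "g 1 = J uh" unfolding g_def using x1 y1 Auh0 by simp
  moreover have "g 0 = J ut + rho A ut zt" unfolding g_def rho_def using x1 y1 by simp
  moreover have "g1 0 = rho A ut es + rhostar J1 A1 ut zt e" unfolding g1_def rho_def rhostar_def using x1 y1 by simp
  moreover have "1/2 * integral {0..1} (\<lambda>s. g3 s * (s*(s-1))) = R3 J3 A2 A3 ut zt e es"
    unfolding R3_def g3_def x_def y_def by simp
  ultimately show ?thesis using T unfolding eta2_def eta_h2_def e_def[symmetric] es_def[symmetric]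
    by (simp add: algebra_simps)
qed

lemma ratio_aux:
  fixes t m b :: real
  assumes "\<bar>t - m\<bar> \<le> b * m" "m > 0"
  shows "\<bar>t / m - 1\<bar> \<le> b"
proof -
  have "t / m - 1 = (t - m) / m" using assms(2) by (simp add: diff_divide_distrib)
  hence "\<bar>t / m - 1\<bar> = \<bar>t - m\<bar> / m" using assms(2) by (simp add: abs_divide)
  also have "\<dots> \<le> b" using assms by (simp add: divide_le_eq)
  finally show ?thesis .
qed

lemma ratio_bound:
  fixes E eta c b :: real
  assumes "\<bar>E - eta\<bar> \<le> c" "c < b * \<bar>E\<bar>"
  shows "\<bar>\<bar>eta\<bar> / \<bar>E\<bar> - 1\<bar> \<le> b" "\<bar>E\<bar> > 0"
proof -
  have "0 \<le> \<bar>E - eta\<bar>" by (rule abs_ge_zero)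
  hence "0 < b * \<bar>E\<bar>" using assms by linarith
  hence "\<bar>E\<bar> \<noteq> 0" by auto
  hence pos: "\<bar>E\<bar> > 0" by simp
  thus "\<bar>E\<bar> > 0" .
  have "\<bar>\<bar>eta\<bar> - \<bar>E\<bar>\<bar> \<le> \<bar>eta - E\<bar>" by (rule abs_triangle_ineq3)
  also have "\<bar>eta - E\<bar> = \<bar>E - eta\<bar>" by (rule abs_minus_commute)
  finally have t1: "\<bar>\<bar>eta\<bar> - \<bar>E\<bar>\<bar> \<le> \<bar>E - eta\<bar>" .
  have "\<bar>\<bar>eta\<bar> - \<bar>E\<bar>\<bar> \<le> b * \<bar>E\<bar>"
    by (rule order_trans[OF order_trans[OF t1 assms(1)] less_imp_le[OF assms(2)]])
  thus "\<bar>\<bar>eta\<bar> / \<bar>E\<bar> - 1\<bar> \<le> b" by (rule ratio_aux[OF _ pos])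
qed

lemma abs4:
  fixes x a b c d :: real
  assumes "x = a + b + c - d"
  shows "\<bar>x\<bar> \<le> \<bar>a\<bar> + \<bar>d\<bar> + \<bar>b\<bar> + \<bar>c\<bar>"
  using assms by linarith

lemma ratio_interval:
  fixes E eta c b b0 :: real
  assumes "\<bar>E - eta\<bar> \<le> c" "c < b * \<bar>E\<bar>" "b < b0"
  shows "\<bar>eta\<bar> / \<bar>E\<bar> \<in> {1 - b0 .. 1 + b0}"
proof -
  have gen: "r \<in> {1 - b0 .. 1 + b0}" if "\<bar>r - 1\<bar> \<le> b" for r :: real
    using that assms(3) by (simp add: abs_le_iff)
  show ?thesis by (rule gen[OF ratio_bound(1)[OF assms(1,2)]])
qed

lemma ratio_limit:
  fixes E eta c b :: "nat \<Rightarrow> real"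
  assumes "\<And>n. \<bar>E n - eta n\<bar> \<le> c n" "\<And>n. c n < b n * \<bar>E n\<bar>" "b \<longlonglongrightarrow> 0"
  shows "(\<lambda>n. \<bar>eta n\<bar> / \<bar>E n\<bar>) \<longlonglongrightarrow> 1"
proof -
  have "(\<lambda>n. \<bar>eta n\<bar> / \<bar>E n\<bar> - 1) \<longlonglongrightarrow> 0"
  proof (rule Lim_null_comparison[OF _ assms(3)])
    have "\<forall>n. norm (\<bar>eta n\<bar> / \<bar>E n\<bar> - 1) \<le> b n"
      unfolding real_norm_def using ratio_bound(1)[OF assms(1,2)] by blast
    thus "\<forall>\<^sub>F n in sequentially. norm (\<bar>eta n\<bar> / \<bar>E n\<bar> - 1) \<le> b n"
      by (rule always_eventually)
  qed
  from tendsto_add[OF this tendsto_const[of 1]]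
  show ?thesis by simp
qed

theorem mainTheorem3:
  fixes A :: "'u::banach \<Rightarrow> ('v::banach \<Rightarrow>\<^sub>L real)"
    and A1 :: "'u \<Rightarrow> ('u \<Rightarrow>\<^sub>L ('v \<Rightarrow>\<^sub>L real))"
    and A2 :: "'u \<Rightarrow> ('u \<Rightarrow>\<^sub>L 'u \<Rightarrow>\<^sub>L ('v \<Rightarrow>\<^sub>L real))"
    and A3 :: "'u \<Rightarrow> ('u \<Rightarrow>\<^sub>L 'u \<Rightarrow>\<^sub>L 'u \<Rightarrow>\<^sub>L ('v \<Rightarrow>\<^sub>L real))"
    and J :: "'u \<Rightarrow> real"
    and J1 :: "'u \<Rightarrow> ('u \<Rightarrow>\<^sub>L real)"
    and J2 :: "'u \<Rightarrow> ('u \<Rightarrow>\<^sub>L 'u \<Rightarrow>\<^sub>L real)"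
    and J3 :: "'u \<Rightarrow> ('u \<Rightarrow>\<^sub>L 'u \<Rightarrow>\<^sub>L 'u \<Rightarrow>\<^sub>L real)"
    and u :: 'u and z :: 'v
  assumes dA: "\<And>w. (A has_derivative blinfun_apply (A1 w)) (at w)"
    and dA1: "\<And>w. (A1 has_derivative blinfun_apply (A2 w)) (at w)"
    and dA2: "\<And>w. (A2 has_derivative blinfun_apply (A3 w)) (at w)"
    and cA3: "continuous_on UNIV A3"
    and dJ: "\<And>w. (J has_derivative blinfun_apply (J1 w)) (at w)"
    and dJ1: "\<And>w. (J1 has_derivative blinfun_apply (J2 w)) (at w)"
    and dJ2: "\<And>w. (J2 has_derivative blinfun_apply (J3 w)) (at w)"
    and cJ3: "continuous_on UNIV J3"
    and primal: "\<And>v. blinfun_apply (A u) v = 0"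
    and adjoint: "\<And>\<phi>. blinfun_apply (blinfun_apply (A1 u) \<phi>) z = blinfun_apply (J1 u) \<phi>"
  shows
   "(\<forall>(Uh::'u set) (Vh::'v set) uh zh ut zt (b0::real) bh.
       galerkin_config A A1 J1 Uh Vh uh zh ut zt \<and> 0 < b0 \<and> b0 < 1 \<and> bh < b0 \<and>
       \<bar>J u - J uh\<bar> < bh * \<bar>J u - J ut\<bar> \<longrightarrow>
       \<bar>eta2 A A1 A2 A3 J1 J3 uh zh ut zt\<bar> / \<bar>J u - J ut\<bar> \<in> {1 - b0 .. 1 + b0})
  \<and> (\<forall>(Uh::nat \<Rightarrow> 'u set) (Vh::nat \<Rightarrow> 'v set) uh zh ut zt (b::nat \<Rightarrow> real).
       (\<forall>n. galerkin_config A A1 J1 (Uh n) (Vh n) (uh n) (zh n) (ut n) (zt n) \<and>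
            \<bar>J u - J (uh n)\<bar> < b n * \<bar>J u - J (ut n)\<bar>) \<and> b \<longlonglongrightarrow> 0 \<longrightarrow>
       (\<lambda>n. \<bar>eta2 A A1 A2 A3 J1 J3 (uh n) (zh n) (ut n) (zt n)\<bar> / \<bar>J u - J (ut n)\<bar>) \<longlonglongrightarrow> 1)
  \<and> (\<forall>(Uh::'u set) (Vh::'v set) uh zh ut zt (b0::real) bh.
       galerkin_config A A1 J1 Uh Vh uh zh ut zt \<and> 0 < b0 \<and> b0 < 1 \<and> bh < b0 \<and>
       gamma J A A2 A3 J3 u z uh zh ut zt < bh * \<bar>J u - J ut\<bar> \<longrightarrow>
       \<bar>eta_h2 A A1 J1 uh zh ut zt\<bar> / \<bar>J u - J ut\<bar> \<in> {1 - b0 .. 1 + b0})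
  \<and> (\<forall>(Uh::nat \<Rightarrow> 'u set) (Vh::nat \<Rightarrow> 'v set) uh zh ut zt (b::nat \<Rightarrow> real).
       (\<forall>n. galerkin_config A A1 J1 (Uh n) (Vh n) (uh n) (zh n) (ut n) (zt n) \<and>
            gamma J A A2 A3 J3 u z (uh n) (zh n) (ut n) (zt n) < b n * \<bar>J u - J (ut n)\<bar>) \<and> b \<longlonglongrightarrow> 0 \<longrightarrow>
       (\<lambda>n. \<bar>eta_h2 A A1 J1 (uh n) (zh n) (ut n) (zt n)\<bar> / \<bar>J u - J (ut n)\<bar>) \<longlonglongrightarrow> 1)"
proof -
  have K: "J uh - J ut = eta2 A A1 A2 A3 J1 J3 uh zh ut zt"
    if "galerkin_config A A1 J1 Uh Vh uh zh ut zt" for Uh Vh uh zh ut zt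
    by (rule key_identity[OF dA dA1 dA2 dJ dJ1 dJ2 that])
  have B1: "\<bar>(J u - J ut) - eta2 A A1 A2 A3 J1 J3 uh zh ut zt\<bar> \<le> \<bar>J u - J uh\<bar>"
    if "galerkin_config A A1 J1 Uh Vh uh zh ut zt" for Uh Vh uh zh ut zt
  proof -
    have "(J u - J ut) - eta2 A A1 A2 A3 J1 J3 uh zh ut zt = J u - J uh"
      using K[OF that] by (simp add: algebra_simps)
    thus ?thesis by (simp only: order_refl)
  qed
  have B2: "\<bar>(J u - J ut) - eta_h2 A A1 J1 uh zh ut zt\<bar> \<le> gamma J A A2 A3 J3 u z uh zh ut zt"
    if "galerkin_config A A1 J1 Uh Vh uh zh ut zt" for Uh Vh uh zh ut zt
  proof -
    have "(J u - J ut) - eta_h2 A A1 J1 uh zh ut zt = (J u - J uh) + rho A ut zt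
       + R3 J3 A2 A3 ut zt (u - ut) (z - zt)
       - (R3 J3 A2 A3 ut zt (u - ut) (z - zt) - R3 J3 A2 A3 ut zt (uh - ut) (zh - zt))"
      using K[OF that] unfolding eta2_def by simp
    thus ?thesis unfolding gamma_def by (rule abs4)
  qed
  show ?thesis
  proof (intro conjI allI impI)
    fix Uh Vh uh zh ut zt b0 bh
    assume H: "galerkin_config A A1 J1 Uh Vh uh zh ut zt \<and> 0 < b0 \<and> b0 < 1 \<and> bh < b0 \<and>
       \<bar>J u - J uh\<bar> < bh * \<bar>J u - J ut\<bar>"
    show "\<bar>eta2 A A1 A2 A3 J1 J3 uh zh ut zt\<bar> / \<bar>J u - J ut\<bar> \<in> {1 - b0 .. 1 + b0}"
      using H by (intro ratio_interval[OF B1]) auto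
  next
    fix Uh Vh uh zh ut zt b0 bh
    assume H: "galerkin_config A A1 J1 Uh Vh uh zh ut zt \<and> 0 < b0 \<and> b0 < 1 \<and> bh < b0 \<and>
       gamma J A A2 A3 J3 u z uh zh ut zt < bh * \<bar>J u - J ut\<bar>"
    show "\<bar>eta_h2 A A1 J1 uh zh ut zt\<bar> / \<bar>J u - J ut\<bar> \<in> {1 - b0 .. 1 + b0}"
      using H by (intro ratio_interval[OF B2]) auto
  next
    fix Uh :: "nat \<Rightarrow> 'u set" and Vh :: "nat \<Rightarrow> 'v set" and uh zh ut zt and b :: "nat \<Rightarrow> real"
    assume H: "(\<forall>n. galerkin_config A A1 J1 (Uh n) (Vh n) (uh n) (zh n) (ut n) (zt n) \<and>
            \<bar>J u - J (uh n)\<bar> < b n * \<bar>J u - J (ut n)\<bar>) \<and> b \<longlonglongrightarrow> 0"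
    show "(\<lambda>n. \<bar>eta2 A A1 A2 A3 J1 J3 (uh n) (zh n) (ut n) (zt n)\<bar> / \<bar>J u - J (ut n)\<bar>) \<longlonglongrightarrow> 1"
      using H by (intro ratio_limit[where c="\<lambda>n. \<bar>J u - J (uh n)\<bar>" and b=b] B1) auto
  next
    fix Uh :: "nat \<Rightarrow> 'u set" and Vh :: "nat \<Rightarrow> 'v set" and uh zh ut zt and b :: "nat \<Rightarrow> real"
    assume H: "(\<forall>n. galerkin_config A A1 J1 (Uh n) (Vh n) (uh n) (zh n) (ut n) (zt n) \<and>
            gamma J A A2 A3 J3 u z (uh n) (zh n) (ut n) (zt n) < b n * \<bar>J u - J (ut n)\<bar>) \<and> b \<longlonglongrightarrow> 0"
    show "(\<lambda>n. \<bar>eta_h2 A A1 J1 (uh n) (zh n) (ut n) (zt n)\<bar> / \<bar>J u - J (ut n)\<bar>) \<longlonglongrightarrow> 1"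
      using H by (intro ratio_limit[where c="\<lambda>n. gamma J A A2 A3 J3 u z (uh n) (zh n) (ut n) (zt n)" and b=b] B2) auto
  qed
qed

end
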